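(* For every $n$ there exists a constant $C_n$ such that for any $t\ge0$, any $n\times n$ transition rate matrix $Q=(q_{ij})$ and any $\lambda>-\sum_{i=1}^n q_{ii}$, the entries of the matrix $e^{-\lambda t}e^{-Qt}$ are bounded in absolute value by $C_n$.
   Context: A transition rate matrix is a real matrix with non-negative off-diagonal entries and non-positive row sums (defective/killed chains allowed). *)

theory Defs
  imports "HOL-Analysis.Analysis"
begin

primrec matpow :: "('a::semiring_1)^'n^'n \<Rightarrow> nat \<Rightarrow> 'a^'n^'n" where
  "matpow A 0 = mat 1"
| "matpow A (Suc k) = A ** matpow A k"

definition mexp :: "real^'n^'n \<Rightarrow> real^'n^'n" where
  "mexp A = (\<Sum>k. (1 / fact k) *\<^sub>R matpow A k)"

definition rate_matrix :: "real^'n^'n \<Rightarrow> bool" where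
  "rate_matrix Q \<longleftrightarrow> (\<forall>i j. i \<noteq> j \<longrightarrow> Q $ i $ j \<ge> 0) \<and> (\<forall>i. (\<Sum>j\<in>UNIV. Q $ i $ j) \<le> 0)"

end

theory Submission
  imports Defs
begin

lemma matpow_bound:
  fixes B :: "real^'n^'n" and d :: "'n \<Rightarrow> real"
  assumes c: "c \<ge> 0" and d: "\<And>i. d i \<ge> 0"
    and Bb: "\<And>i m. \<bar>B $ i $ m\<bar> \<le> c * d i"
  shows "\<bar>matpow B (Suc k) $ i $ j\<bar> \<le> c ^ Suc k * (sum d UNIV) ^ k * d i"
proof (induction k arbitrary: i j)
  case 0
  show ?case using Bb[of i j] by simp
next
  case (Suc k)
  let ?s = "sum d UNIV"
  have "\<bar>matpow B (Suc (Suc k)) $ i $ j\<bar> = \<bar>\<Sum>m\<in>UNIV. B $ i $ m * matpow B (Suc k) $ m $ j\<bar>"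
    by (simp add: matrix_matrix_mult_def)
  also have "\<dots> \<le> (\<Sum>m\<in>UNIV. \<bar>B $ i $ m * matpow B (Suc k) $ m $ j\<bar>)"
    by (rule sum_abs)
  also have "\<dots> \<le> (\<Sum>m\<in>UNIV. (c * d i) * (c ^ Suc k * ?s ^ k * d m))"
  proof (rule sum_mono)
    fix m
    show "\<bar>B $ i $ m * matpow B (Suc k) $ m $ j\<bar> \<le> (c * d i) * (c ^ Suc k * ?s ^ k * d m)"
      unfolding abs_mult using Bb[of i m] Suc.IH[of m j]
      by (intro mult_mono) auto
  qed
  also have "\<dots> = (c * d i * (c ^ Suc k * ?s ^ k)) * ?s"
    by (simp add: sum_distrib_left mult.assoc)
  also have "\<dots> = c ^ Suc (Suc k) * ?s ^ Suc k * d i"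
    by (simp add: algebra_simps)
  finally show ?case .
qed

lemma matpow_bound2:
  fixes B :: "real^'n^'n" and d :: "'n \<Rightarrow> real"
  assumes c: "c \<ge> 0" and d: "\<And>i. d i \<ge> 0"
    and Bb: "\<And>i m. \<bar>B $ i $ m\<bar> \<le> c * d i"
  shows "\<bar>matpow B k $ i $ j\<bar> \<le> (c * sum d UNIV) ^ k"
proof (cases k)
  case 0
  then show ?thesis by (simp add: mat_def)
next
  case (Suc k')
  have di: "d i \<le> sum d UNIV" using d by (intro member_le_sum) auto
  have "\<bar>matpow B k $ i $ j\<bar> \<le> c ^ Suc k' * (sum d UNIV) ^ k' * d i"
    using matpow_bound[OF c d Bb] Suc by blast
  also have "\<dots> \<le> c ^ Suc k' * (sum d UNIV) ^ k' * sum d UNIV"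
    using di c d by (intro mult_left_mono) (auto intro!: mult_nonneg_nonneg zero_le_power sum_nonneg)
  finally show ?thesis using Suc by (simp add: power_mult_distrib mult_ac)
qed

lemma mexp_bound:
  fixes B :: "real^'n^'n" and d :: "'n \<Rightarrow> real"
  assumes c: "c \<ge> 0" and d: "\<And>i. d i \<ge> 0"
    and Bb: "\<And>i m. \<bar>B $ i $ m\<bar> \<le> c * d i"
  shows "\<bar>mexp B $ i $ j\<bar> \<le> exp (c * sum d UNIV)"
proof -
  let ?x = "c * sum d UNIV"
  let ?f = "\<lambda>k. (1 / fact k) *\<^sub>R matpow B k"
  have ent: "\<bar>?f k $ a $ b\<bar> \<le> ?x ^ k / fact k" for k a b
    using matpow_bound2[OF c d Bb, of k a b] by (simp add: divide_right_mono)
  have se: "summable (\<lambda>k. ?x ^ k / fact k)"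
    using summable_exp[of ?x] by (simp add: divide_inverse mult.commute)
  have nb: "norm (?f k) \<le> real (CARD('n)) * (real (CARD('n)) * (?x ^ k / fact k))" for k
  proof -
    have "norm (?f k) \<le> (\<Sum>a\<in>UNIV. norm (?f k $ a))"
      unfolding norm_vec_def by (rule L2_set_le_sum) simp
    also have "\<dots> \<le> (\<Sum>a\<in>(UNIV::'n set). real (CARD('n)) * (?x ^ k / fact k))"
    proof (rule sum_mono)
      fix a
      have "norm (?f k $ a) \<le> (\<Sum>b\<in>UNIV. \<bar>?f k $ a $ b\<bar>)" by (rule norm_le_l1_cart)
      also have "\<dots> \<le> (\<Sum>b\<in>(UNIV::'n set). ?x ^ k / fact k)" by (rule sum_mono) (rule ent)
      finally show "norm (?f k $ a) \<le> real (CARD('n)) * (?x ^ k / fact k)" by simp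
    qed
    finally show ?thesis by simp
  qed
  have sf: "summable ?f"
    by (rule summable_norm_cancel, rule summable_comparison_test[OF _ summable_mult[OF summable_mult[OF se]]])
       (use nb in auto)
  have comp: "mexp B $ i $ j = (\<Sum>k. ?f k $ i $ j)"
  proof -
    have "mexp B $ i = (\<Sum>k. ?f k $ i)"
      unfolding mexp_def using bounded_linear.suminf[OF bounded_linear_vec_nth[of i] sf] by simp
    moreover have "summable (\<lambda>k. ?f k $ i)"
      using bounded_linear.summable[OF bounded_linear_vec_nth[of i] sf] by simp
    ultimately show ?thesis
      using bounded_linear.suminf[OF bounded_linear_vec_nth[of j], of "\<lambda>k. ?f k $ i"] by simp
  qed
  have sa: "summable (\<lambda>k. \<bar>?f k $ i $ j\<bar>)"
    by (rule summable_rabs_comparison_test[OF _ se]) (use ent in blast)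
  have "\<bar>\<Sum>k. ?f k $ i $ j\<bar> \<le> (\<Sum>k. \<bar>?f k $ i $ j\<bar>)"
    by (rule summable_rabs[OF sa])
  also have "\<dots> \<le> (\<Sum>k. ?x ^ k / fact k)"
    by (rule suminf_le[OF ent sa se])
  also have "\<dots> = exp ?x"
  proof -
    have "(\<lambda>k. ?x ^ k /\<^sub>R fact k) sums exp ?x" by (rule exp_converges)
    hence "(\<lambda>k. ?x ^ k / fact k) sums exp ?x" by (simp add: divide_inverse_commute)
    thus ?thesis by (rule sums_unique[symmetric])
  qed
  finally show ?thesis using comp by simp
qed

theorem lemma4:
  "\<exists>C::real. \<forall>t::real. \<forall>Q::real^'n^'n. \<forall>l::real.
     t \<ge> 0 \<longrightarrow> rate_matrix Q \<longrightarrow> l > - (\<Sum>i\<in>UNIV. Q $ i $ i) \<longrightarrow>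
     (\<forall>i j. \<bar>(exp (- l * t) *\<^sub>R mexp (- (t *\<^sub>R Q))) $ i $ j\<bar> \<le> C)"
proof (intro exI allI impI)
  fix t :: real and Q :: "real^'n^'n" and l :: real and i j
  assume t: "t \<ge> 0" and R: "rate_matrix Q" and l: "l > - (\<Sum>i\<in>UNIV. Q $ i $ i)"
  define d where "d i = - Q $ i $ i" for i
  have off: "\<And>i j. i \<noteq> j \<Longrightarrow> Q $ i $ j \<ge> 0" and rs: "\<And>i. (\<Sum>j\<in>UNIV. Q $ i $ j) \<le> 0"
    using R unfolding rate_matrix_def by auto
  have split: "(\<Sum>j\<in>UNIV. Q $ a $ j) = Q $ a $ a + (\<Sum>j\<in>UNIV - {a}. Q $ a $ j)" for a
    by (simp add: sum.remove)
  have offsum: "Q $ a $ m \<le> (\<Sum>j\<in>UNIV - {a}. Q $ a $ j)" if "m \<noteq> a" for a m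
    using that off by (intro member_le_sum) auto
  have offnn: "(\<Sum>j\<in>UNIV - {a}. Q $ a $ j) \<ge> 0" for a
    using off by (intro sum_nonneg) auto
  have dnn: "d a \<ge> 0" for a using rs[of a] split[of a] offnn[of a] unfolding d_def by linarith
  have Qb: "\<bar>Q $ a $ m\<bar> \<le> d a" for a m
  proof (cases "m = a")
    case True then show ?thesis using dnn[of a] unfolding d_def by simp
  next
    case False then show ?thesis using off[of a m] offsum[of m a] rs[of a] split[of a]
      unfolding d_def by auto
  qed
  have Bb: "\<bar>(- (t *\<^sub>R Q)) $ a $ m\<bar> \<le> t * d a" for a m
    using Qb[of a m] t by (simp add: abs_mult mult_left_mono)
  have sd: "sum d UNIV = - (\<Sum>i\<in>UNIV. Q $ i $ i)"
    unfolding d_def by (simp add: sum_negf)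
  have "\<bar>mexp (- (t *\<^sub>R Q)) $ i $ j\<bar> \<le> exp (t * sum d UNIV)"
    by (rule mexp_bound[OF t dnn Bb])
  hence "\<bar>(exp (- l * t) *\<^sub>R mexp (- (t *\<^sub>R Q))) $ i $ j\<bar> \<le> exp (- l * t) * exp (t * sum d UNIV)"
    by (simp add: abs_mult)
  also have "\<dots> = exp (t * (sum d UNIV - l))" by (simp add: exp_add[symmetric] algebra_simps)
  also have "\<dots> \<le> 1" using t l sd by (simp add: mult_nonneg_nonpos)
  finally show "\<bar>(exp (- l * t) *\<^sub>R mexp (- (t *\<^sub>R Q))) $ i $ j\<bar> \<le> 1" .
qed

end
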